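(* Let $q\ge 67$ be a prime. For a prime $p\ne q$ let $f_p$ be the smallest integer $k\ge1$ with $p^k\equiv1\pmod q$, and put $$v(q)=\sum_{p\ne q,\ p\not\equiv1\ (\mathrm{mod}\ q)}\frac{\log p}{p^{f_p}-1},$$ the sum over primes $p$. Then $$v(q)\le\frac{2\log(9\log q)\,\log q}{3q}.$$ *)

theory Defs
  imports "HOL-Analysis.Analysis" "HOL-Number_Theory.Number_Theory"
begin

definition fp :: "nat \<Rightarrow> nat \<Rightarrow> nat" where
  "fp q p = ord q p"

definition vset :: "nat \<Rightarrow> nat set" where
  "vset q = {p. prime p \<and> p \<noteq> q \<and> \<not> [p = 1] (mod q)}"

definition vterm :: "nat \<Rightarrow> nat \<Rightarrow> real" where
  "vterm q p = ln (real p) / (real p ^ fp q p - 1)"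

end

theory Submission
  imports Defs
begin

lemma vset_basic:
  assumes q: "prime q" "q \<ge> 67" and p: "p \<in> vset q"
  shows "prime p" "p \<noteq> q" "ord q p \<ge> 2" "q dvd p ^ ord q p - 1" "p \<ge> 2"
    "\<not> q dvd p - 1"
proof -
  show pp: "prime p" and pq: "p \<noteq> q" using p by (auto simp: vset_def)
  have n1: "\<not> [p = 1] (mod q)" using p by (auto simp: vset_def)
  have cop: "coprime q p" using primes_coprime[OF q(1) pp] pq by auto
  have "ord q p > 0" using cop by simp
  moreover have "ord q p \<noteq> 1" using n1 ord_eq_Suc_0_iff[of q p] by simp
  ultimately show "ord q p \<ge> 2" by linarith
  show "q dvd p ^ ord q p - 1" using ord[of p q] cong_to_1_nat by blast
  show "p \<ge> 2" using pp prime_ge_2_nat by blast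
  show "\<not> q dvd p - 1"
  proof
    assume "q dvd p - 1"
    hence "[p - 1 = 0] (mod q)" by (simp add: cong_0_iff)
    hence "[p - 1 + 1 = 0 + 1] (mod q)" by (rule cong_add) simp
    moreover have "p - 1 + 1 = p" using \<open>p \<ge> 2\<close> by simp
    ultimately show False using n1 by simp
  qed
qed

lemma dvd_pow_minus_1:
  fixes p f :: nat assumes "p \<ge> 1"
  shows "p - 1 dvd p ^ f - 1"
proof -
  have "[p = 1] (mod p - 1)"
    using assms by (cases "p = 1") (auto simp: cong_def mod_if intro!: cong_le_nat[THEN iffD2])
  hence "[p ^ f = 1 ^ f] (mod p - 1)" by (rule cong_pow)
  thus ?thesis using cong_to_1_nat by simp
qed

lemma vset_small:
  assumes q: "prime q" "q \<ge> 67" and p: "p \<in> vset q" and pl: "p < q"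
  shows "q * (p - 1) dvd p ^ ord q p - 1" "ord q p \<ge> 3"
proof -
  note b = vset_basic[OF q p]
  have c: "coprime q (p - 1)"
  proof -
    have "\<not> q dvd p - 1"
    proof
      assume "q dvd p - 1"
      hence "q \<le> p - 1" by (rule dvd_imp_le) (use b(5) in auto)
      with pl show False by auto
    qed
    thus ?thesis using q(1) by (simp add: prime_imp_coprime)
  qed
  show "q * (p - 1) dvd p ^ ord q p - 1"
    by (rule divides_mult[OF b(4) dvd_pow_minus_1 c]) (use b(5) in auto)
  show "ord q p \<ge> 3"
  proof (rule ccontr)
    assume "\<not> ord q p \<ge> 3"
    hence o2: "ord q p = 2" using b(3) by simp
    have "p ^ 2 - 1 = (p - 1) * (p + 1)" using b(5)
      by (simp add: power2_eq_square algebra_simps)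
    hence "q dvd (p - 1) * (p + 1)" using b(4) o2 by simp
    hence "q dvd p + 1" using b(6) q(1) prime_dvd_mult_nat by blast
    hence "q \<le> p + 1" by (rule dvd_imp_le) simp
    hence "p + 1 = q" using pl by simp
    moreover have "odd q" using q prime_odd_nat by auto
    ultimately have "odd (p + 1)" by simp
    hence "even p" by simp
    with b(1) b(5) have "p = 2" using prime_odd_nat[of p] by (cases "2 < p") auto
    with \<open>p + 1 = q\<close> q(2) show False by simp
  qed
qed

lemma vset_two:
  assumes q: "prime q" "q \<ge> 67" and p: "p \<in> vset q" and o2: "ord q p = 2"
  shows "q dvd p + 1" "p + 1 \<ge> 2 * q"
proof -
  note b = vset_basic[OF q p]
  have "p ^ 2 - 1 = (p - 1) * (p + 1)" using b(5)
    by (simp add: power2_eq_square algebra_simps)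
  hence "q dvd (p - 1) * (p + 1)" using b(4) o2 by simp
  thus qd: "q dvd p + 1" using b(6) q(1) prime_dvd_mult_nat by blast
  then obtain k where k: "p + 1 = q * k" by blast
  have "k \<noteq> 0"
  proof
    assume "k = 0" with k show False by simp
  qed
  moreover have "k \<noteq> 1"
  proof
    assume "k = 1"
    hence "p + 1 = q" using k by simp
    moreover have "odd q" using q prime_odd_nat by auto
    ultimately have "odd (p + 1)" by simp
    hence "even p" by simp
    with b(1) b(5) have "p = 2" using prime_odd_nat[of p] by (cases "2 < p") auto
    with \<open>p + 1 = q\<close> q(2) show False by simp
  qed
  ultimately have "k \<ge> 2" by simp
  thus "p + 1 \<ge> 2 * q" using k by (metis mult.commute mult_le_mono1)
qed

lemma tele_sub:
  fixes d g :: "nat \<Rightarrow> real"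
  assumes "K \<subseteq> {Suc a..M}" "a \<le> M"
    "\<And>k. k \<in> {Suc a..M} \<Longrightarrow> 0 \<le> d k"
    "\<And>k. k \<in> {Suc a..M} \<Longrightarrow> d k \<le> g (k-1) - g k"
  shows "sum d K \<le> g a - g M"
proof -
  have "sum d K \<le> sum d {Suc a..M}" by (rule sum_mono2) (use assms in auto)
  also have "\<dots> \<le> (\<Sum>k\<in>{Suc a..M}. g (k-1) - g k)" by (rule sum_mono) (use assms in auto)
  also have "\<dots> = g a - g M" using \<open>a \<le> M\<close>
  proof (induction M)
    case 0 then show ?case by simp
  next
    case (Suc M)
    show ?case
    proof (cases "a \<le> M")
      case True
      have "{Suc a..Suc M} = insert (Suc M) {Suc a..M}" using True by auto
      then show ?thesis using Suc True by simp
    next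
      case False
      then have "a = Suc M" using Suc by simp
      then show ?thesis by simp
    qed
  qed
  finally show ?thesis .
qed

lemma ln_ratio_mono:
  fixes y Y :: real
  assumes "1 < Y" "Y \<le> y" "1 \<le> ln Y"
  shows "ln y / (y - 1) \<le> ln Y / (Y - 1)"
proof -
  have "ln (y / Y) \<le> y / Y - 1" using assms by (intro ln_le_minus_one) auto
  hence l: "ln y \<le> ln Y + (y / Y - 1)" using assms by (simp add: ln_div)
  have "(y / Y - 1) * (Y - 1) \<le> ln Y * (y - Y)"
  proof -
    have "(y / Y - 1) * (Y - 1) = (y - Y) * ((Y - 1) / Y)" using assms by (simp add: field_simps)
    also have "\<dots> \<le> (y - Y) * 1" using assms by (intro mult_left_mono) auto
    also have "\<dots> \<le> (y - Y) * ln Y" using assms by (intro mult_left_mono) auto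
    finally show ?thesis by (simp add: mult.commute)
  qed
  moreover have "ln y * (Y - 1) \<le> (ln Y + (y / Y - 1)) * (Y - 1)"
    using l assms by (intro mult_right_mono) auto
  ultimately have "ln y * (Y - 1) \<le> ln Y * (y - 1)"
    by (simp add: algebra_simps)
  thus ?thesis using assms by (simp add: divide_simps)
qed

definition Gh :: "real \<Rightarrow> real" where
  "Gh x = (ln x)^2/4 - (5/3 + ln x)/(2*x) - 1/(2*x)"

lemma head_step:
  fixes x :: real assumes x: "x \<ge> 5"
  shows "ln x / (x - 1) \<le> Gh x - Gh (x - 2)"
proof -
  define a where "a = ln x"
  define b where "b = ln (x - 2)"
  define d where "d = a - b"
  have a1: "a \<ge> 1"
  proof -
    have "exp 1 \<le> (3::real)" using exp_le by simp
    hence "exp 1 \<le> x" using x by linarith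
    hence "ln (exp 1) \<le> ln x" using x by (subst ln_le_cancel_iff) auto
    thus ?thesis by (simp add: a_def)
  qed
  have "ln ((x - 2) / x) \<le> (x - 2)/x - 1" using x by (intro ln_le_minus_one) auto
  hence d1: "d \<ge> 2 / x" using x by (simp add: d_def a_def b_def ln_div field_simps)
  have "ln (x / (x - 2)) \<le> x/(x - 2) - 1" using x by (intro ln_le_minus_one) auto
  hence d2: "d \<le> 2 / (x - 2)" using x by (simp add: d_def a_def b_def ln_div field_simps)
  have "2 / (x - 2) \<le> 2/3" using x by (simp add: field_simps)
  hence pos: "2 * a - 2 / (x - 2) \<ge> 0" using a1 by linarith
  have s1: "d * (2 * a - d) \<ge> (2 / x) * (2 * a - 2 / (x - 2))"
  proof -
    have "0 \<le> 2 / x" using x by simp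
    hence "0 \<le> d" using d1 by linarith
    thus ?thesis using d1 d2 pos x by (intro mult_mono) auto
  qed
  have xd: "x * d \<le> 10 / 3"
  proof -
    have "x * d \<le> x * (2 / (x - 2))" using d2 x by (intro mult_left_mono) auto
    also have "\<dots> \<le> 10/3" using x by (simp add: field_simps)
    finally show ?thesis .
  qed
  have e1: "(a^2 - b^2)/4 = d * (2 * a - d) / 4" unfolding d_def by (simp add: power2_eq_square algebra_simps)
  have e2: "(5/3 + b)/(2*(x-2)) - (5/3 + a)/(2*x) = (10/3 + 2 * a - x * d) / (2 * x * (x - 2))"
    unfolding d_def using x by (simp add: field_simps)
  have e3: "1/(2*(x-2)) - 1/(2*x) = 1 / (x * (x - 2))" using x by (simp add: field_simps)
  have "Gh x - Gh (x - 2) = (a^2 - b^2)/4 + ((5/3 + b)/(2*(x-2)) - (5/3 + a)/(2*x))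
      + (1/(2*(x-2)) - 1/(2*x))"
  proof -
    have g1: "Gh x = a^2/4 - (5/3+a)/(2*x) - 1/(2*x)" by (simp add: Gh_def a_def)
    have g2: "Gh (x-2) = b^2/4 - (5/3+b)/(2*(x-2)) - 1/(2*(x-2))" by (simp add: Gh_def b_def)
    have g3: "(a^2 - b^2)/4 = a^2/4 - b^2/4" by (simp add: diff_divide_distrib)
    show ?thesis using g1 g2 g3 by linarith
  qed
  also have "\<dots> = d * (2 * a - d) / 4 + (10/3 + 2 * a - x * d) / (2 * x * (x - 2)) + 1 / (x * (x - 2))"
    using e1 e2 e3 by simp
  also have "\<dots> \<ge> (2 / x) * (2 * a - 2 / (x - 2)) / 4 + (2 * a) / (2 * x * (x - 2)) + 1 / (x * (x - 2))"
  proof -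
    have "(2 * a) / (2 * x * (x - 2)) \<le> (10/3 + 2 * a - x * d) / (2 * x * (x - 2))"
      using xd x by (intro divide_right_mono) auto
    moreover have "(2 / x) * (2 * a - 2 / (x - 2)) / 4 \<le> d * (2 * a - d) / 4"
      using s1 by (rule divide_right_mono) simp
    ultimately show ?thesis by linarith
  qed
  also have "(2 / x) * (2 * a - 2 / (x - 2)) / 4 + (2 * a) / (2 * x * (x - 2)) + 1 / (x * (x - 2))
      = a / x + a / (x * (x - 2))"
  proof -
    have nz: "x \<noteq> 0" "x - 2 \<noteq> 0" using x by auto
    have "(2 / x) * (2 * a - 2 / (x - 2)) / 4 = a / x - 1 / (x * (x - 2))"
      using nz by (simp add: field_simps)
    moreover have "(2 * a) / (2 * x * (x - 2)) = a / (x * (x - 2))" by simp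
    ultimately show ?thesis by simp
  qed
  also have "a / (x * (x - 2)) \<ge> a / (x * (x - 1))"
    using x a1 by (intro divide_left_mono mult_pos_pos) auto
  hence "a / x + a / (x * (x - 2)) \<ge> a / (x - 1)"
  proof -
    have "a / x + a / (x * (x - 1)) = a / (x - 1)" using x by (simp add: field_simps)
    thus ?thesis using \<open>a / (x * (x - 2)) \<ge> a / (x * (x - 1))\<close> by linarith
  qed
  finally show ?thesis unfolding a_def by simp
qed

definition g1 :: "real \<Rightarrow> nat \<Rightarrow> real" where
  "g1 L k = (L + 3 + ln (real k)) / real k"

lemma s1_step:
  fixes k :: nat and L :: real assumes k: "k \<ge> 2" and L: "L \<ge> 0"
  shows "(L + ln k) / (k * (k - 1)) \<le> g1 L (k - 1) - g1 L k"
proof -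
  define x where "x = real k"
  have x: "x \<ge> 2" using k by (simp add: x_def)
  have km: "real (k - 1) = x - 1" using k by (simp add: x_def of_nat_diff)
  have "ln (x / (x - 1)) \<le> x / (x - 1) - 1" using x by (intro ln_le_minus_one) auto
  hence l: "ln x - ln (x - 1) \<le> 1 / (x - 1)" using x by (simp add: ln_div field_simps)
  have "x * (ln x - ln (x - 1)) \<le> x * (1 / (x - 1))" using l x by (intro mult_left_mono) auto
  also have "\<dots> \<le> 2" using x by (simp add: field_simps)
  finally have l2: "x * (ln x - ln (x - 1)) \<le> 2" .
  have eq: "g1 L (k - 1) - g1 L k = (L + 3 + ln x - x * (ln x - ln (x - 1))) / (x * (x - 1))"
    unfolding g1_def km x_def[symmetric] using x by (simp add: field_simps)
  have "(L + ln x) / (x * (x - 1)) \<le> (L + 3 + ln x - x * (ln x - ln (x - 1))) / (x * (x - 1))"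
    using l2 x by (intro divide_right_mono) auto
  thus ?thesis using eq km by (simp add: x_def)
qed

lemma g1_nonneg: "L \<ge> 0 \<Longrightarrow> g1 L k \<ge> 0"
  unfolding g1_def by (cases "k = 0") auto

lemma s1_term:
  fixes p q k :: nat assumes q: "q \<ge> 3" and k: "k \<ge> 2" and pk: "p + 1 = q * k"
  shows "ln p / (real p ^ 2 - 1) \<le> (g1 (ln q) (k - 1) - g1 (ln q) k) / real q ^ 2"
proof -
  have "real (p + 1) = real (q * k)" using pk by simp
  hence rp: "real p = real q * real k - 1" by simp
  have qk: "real q * real k \<ge> 6" using q k mult_mono[of 3 "real q" 2 "real k"] by simp
  have p2: "real p ^ 2 - 1 = (real q * real k - 2) * (real q * real k)"
    unfolding rp by (simp add: power2_eq_square algebra_simps)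
  have low: "real q * real k - 2 \<ge> (real k - 1) * real q" using q by (simp add: algebra_simps)
  have kpos: "real k - 1 \<ge> 1" using k by simp
  have pp: "real p > 0" using rp qk by simp
  have lnp: "ln p \<le> ln q + ln k"
  proof -
    have "ln p \<le> ln (real q * real k)" using rp pp by (subst ln_le_cancel_iff) auto
    also have "\<dots> = ln q + ln k" using q k by (simp add: ln_mult)
    finally show ?thesis .
  qed
  have lnp0: "ln p \<ge> 0" using rp qk by simp
  have "ln p / (real p ^ 2 - 1) \<le> (ln q + ln k) / ((real k - 1) * real q * (real q * real k))"
    unfolding p2
  proof (rule frac_le)
    show "0 \<le> ln q + ln k" using q k by simp
    show "ln p \<le> ln q + ln k" by (rule lnp)
    show "0 < (real k - 1) * real q * (real q * real k)" using q k by simp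
    show "(real k - 1) * real q * (real q * real k) \<le> (real q * real k - 2) * (real q * real k)"
      using low qk by (intro mult_right_mono) auto
  qed
  also have "\<dots> = ((ln q + ln k) / (real k * (real k - 1))) / real q ^ 2"
    by (simp add: power2_eq_square field_simps)
  also have "\<dots> \<le> (g1 (ln q) (k - 1) - g1 (ln q) k) / real q ^ 2"
    using s1_step[OF k, of "ln q"] q k by (intro divide_right_mono) (auto simp: of_nat_diff)
  finally show ?thesis .
qed

lemma s2_term:
  fixes p q f :: nat assumes q: "q \<ge> 3" and pq: "q < p" and f: "f \<ge> 3"
  shows "ln p / (real p ^ f - 1) \<le> (ln q / q) * (1 / real (p - 1) - 1 / real p)"
proof -
  have p: "real p \<ge> 4" using pq q by linarith
  have e: "exp 1 \<le> real q" using q exp_le by linarith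
  have "real p ^ 3 \<le> real p ^ f" using p f by (intro power_increasing) auto
  have "ln p / (real p ^ f - 1) \<le> ln p / (real p ^ 3 - 1)"
  proof (rule divide_left_mono)
    show "0 \<le> ln (real p)" using p by simp
    have "real p ^ 3 \<ge> 4 ^ 3" using p by (intro power_mono) auto
    thus "0 < (real p ^ f - 1) * (real p ^ 3 - 1)" using \<open>real p ^ 3 \<le> real p ^ f\<close>
      by (intro mult_pos_pos) auto
    show "real p ^ 3 - 1 \<le> real p ^ f - 1" using \<open>real p ^ 3 \<le> real p ^ f\<close> by simp
  qed
  also have "\<dots> = (ln p / p) * (p / (real p ^ 3 - 1))" using p by (simp add: field_simps)
  also have "\<dots> \<le> (ln q / q) * (1 / (real p * (real p - 1)))"
  proof (rule mult_mono)
    show "ln p / p \<le> ln q / q" using ln_x_over_x_mono[OF e] pq by simp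
    have "1 \<le> real p * real p" using p mult_mono[of 1 "real p" 1 "real p"] by simp
    hence "real p * (real p * (real p - 1)) \<le> real p ^ 3 - 1" by (simp add: power3_eq_cube algebra_simps)
    hence "real p / (real p ^ 3 - 1) \<le> real p / (real p * (real p * (real p - 1)))"
      using p by (intro divide_left_mono mult_pos_pos) auto
    also have "\<dots> = 1 / (real p * (real p - 1))" using p by simp
    finally show "real p / (real p ^ 3 - 1) \<le> 1 / (real p * (real p - 1))" .
    show "0 \<le> ln q / q" using q by simp
    have "real p ^ 3 \<ge> 4 ^ 3" using p by (intro power_mono) auto
    thus "0 \<le> real p / (real p ^ 3 - 1)" using p by simp
  qed
  also have "1 / (real p * (real p - 1)) = 1 / real (p - 1) - 1 / real p"
    using p pq by (simp add: of_nat_diff field_simps)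
  finally show ?thesis .
qed

lemma s5_term:
  fixes p F f :: nat assumes p: "p \<ge> 2" and F: "F \<ge> 2" and f: "f > F"
  shows "ln p / (real p ^ f - 1) \<le> (1 / 2 ^ (F - 2)) * (1 / real p - 1 / real (p + 1))"
proof -
  have rp: "real p \<ge> 2" using p by simp
  have "real p ^ f \<ge> real p ^ (F + 1)" using rp f by (intro power_increasing) auto
  also have "real p ^ (F + 1) = real p ^ (F - 2) * real p ^ 3"
    using F by (simp flip: power_add)
  also have "real p ^ (F - 2) \<ge> 2 ^ (F - 2)" using rp by (intro power_mono) auto
  hence "real p ^ (F - 2) * real p ^ 3 \<ge> 2 ^ (F - 2) * real p ^ 3" by (intro mult_right_mono) auto
  finally have pf: "real p ^ f \<ge> 2 ^ (F - 2) * real p ^ 3" .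
  have c1: "(2::real) ^ (F - 2) \<ge> 1" by simp
  have p3: "real p ^ 3 \<ge> 8" using rp power_mono[of 2 "real p" 3] by simp
  have "(2::real) ^ (F - 2) * (real p ^ 3 - 1) = 2 ^ (F - 2) * real p ^ 3 - 2 ^ (F - 2)"
    by (simp add: algebra_simps)
  hence den: "real p ^ f - 1 \<ge> 2 ^ (F - 2) * (real p ^ 3 - 1)"
    using pf c1 by linarith
  have "ln p \<le> real p - 1" using rp by (intro ln_le_minus_one) auto
  have "ln p / (real p ^ f - 1) \<le> (real p - 1) / (2 ^ (F - 2) * (real p ^ 3 - 1))"
  proof (rule frac_le)
    show "0 \<le> real p - 1" using rp by simp
    show "ln p \<le> real p - 1" by fact
    show "0 < 2 ^ (F - 2) * (real p ^ 3 - 1)" using p3 by simp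
    show "2 ^ (F - 2) * (real p ^ 3 - 1) \<le> real p ^ f - 1" by (rule den)
  qed
  also have "\<dots> = (1 / 2 ^ (F - 2)) * ((real p - 1) / (real p ^ 3 - 1))" by simp
  also have "(real p - 1) / (real p ^ 3 - 1) \<le> 1 / real p - 1 / real (p + 1)"
  proof -
    have fac: "real p ^ 3 - 1 = (real p - 1) * (real p ^ 2 + real p + 1)"
      by (simp add: power3_eq_cube power2_eq_square algebra_simps)
    have "0 \<le> real p ^ 2" by simp
    hence nz: "real p - 1 \<noteq> 0" "real p ^ 2 + real p + 1 \<noteq> 0" using rp by linarith+
    have "(real p - 1) / (real p ^ 3 - 1) = 1 / (real p ^ 2 + real p + 1)"
      unfolding fac using nz(1) by (rule nonzero_divide_mult_cancel_left)
    also have "\<dots> \<le> 1 / (real p * (real p + 1))"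
    proof (rule divide_left_mono)
      have pos1: "0 < real p ^ 2 + real p + 1" using nz \<open>0 \<le> real p ^ 2\<close> rp by linarith
      have pos2: "0 < real p * (real p + 1)" using rp by simp
      show "0 < (real p ^ 2 + real p + 1) * (real p * (real p + 1))" using mult_pos_pos[OF pos1 pos2] .
      show "real p * (real p + 1) \<le> real p ^ 2 + real p + 1" by (simp add: power2_eq_square algebra_simps)
    qed simp
    also have "\<dots> = 1 / real p - 1 / real (p + 1)" using rp by (simp add: field_simps)
    finally show ?thesis .
  qed
  hence "(1 / 2 ^ (F - 2)) * ((real p - 1) / (real p ^ 3 - 1)) \<le> (1 / 2 ^ (F - 2)) * (1 / real p - 1 / real (p + 1))"
    by (intro mult_left_mono) auto
  finally show ?thesis .
qed

lemma s4_term: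
  fixes p q f P :: nat
  assumes q: "q \<ge> 3" and P: "P \<ge> 1" "q * P + 1 \<le> q * q" and f: "f \<ge> 1"
    and big: "real p ^ f - 1 \<ge> real q * real P" and p: "p \<ge> 2"
  shows "ln p / (real p ^ f - 1) \<le> 2 * ln q / (f * q * P)"
proof -
  define y where "y = real p ^ f"
  define Y where "Y = real q * real P + 1"
  have "real q * real P \<ge> 3 * 1" using q P by (intro mult_mono) auto
  hence Y1: "Y \<ge> 4" by (simp add: Y_def)
  have lnY: "1 \<le> ln Y"
  proof -
    have "exp 1 \<le> Y" using exp_le Y1 by linarith
    hence "ln (exp 1) \<le> ln Y" using Y1 by (subst ln_le_cancel_iff) auto
    thus ?thesis by simp
  qed
  have yY: "Y \<le> y" using big by (simp add: Y_def y_def)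
  have lny: "ln p = ln y / f" using p f by (simp add: y_def ln_realpow)
  have "ln p / (real p ^ f - 1) = (ln y / (y - 1)) / f" by (simp add: lny y_def)
  also have "\<dots> \<le> (ln Y / (Y - 1)) / f"
    using ln_ratio_mono[of Y y] Y1 yY lnY by (intro divide_right_mono) auto
  also have "ln Y \<le> 2 * ln q"
  proof -
    have "real (q * P + 1) \<le> real (q * q)" using P(2) by (simp only: of_nat_le_iff)
    hence "Y \<le> real q * real q" unfolding Y_def by simp
    hence "ln Y \<le> ln (real q * real q)" using Y1 by (subst ln_le_cancel_iff) auto
    also have "\<dots> = 2 * ln q" using q by (simp add: ln_mult)
    finally show ?thesis .
  qed
  hence "(ln Y / (Y - 1)) / f \<le> (2 * ln q / (Y - 1)) / f"
    using Y1 by (intro divide_right_mono) auto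
  also have "\<dots> = 2 * ln q / (f * q * P)" by (simp add: Y_def field_simps)
  finally show ?thesis .
qed

lemma tele_fin:
  fixes g :: "nat \<Rightarrow> real"
  assumes "finite K" "K \<subseteq> {Suc a..}" "\<And>k. k \<ge> Suc a \<Longrightarrow> g k \<le> g (k - 1)" "\<And>k. g k \<ge> 0"
  shows "(\<Sum>k\<in>K. g (k - 1) - g k) \<le> g a"
proof -
  define M where "M = Max (insert (Suc a) K)"
  have KM: "K \<subseteq> {Suc a..M}" using assms(1,2) by (auto simp: M_def)
  have aM: "a \<le> M" using assms(1) by (simp add: M_def) (meson Max_ge finite.insertI insertI1 Suc_leD)
  have "(\<Sum>k\<in>K. g (k - 1) - g k) \<le> g a - g M"
    by (rule tele_sub[OF KM aM]) (use assms(3) in auto)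
  thus ?thesis using assms(4)[of M] by linarith
qed

lemma sum_union_le:
  fixes g :: "'a \<Rightarrow> real"
  assumes "finite A" "finite B" "\<And>x. x \<in> A \<union> B \<Longrightarrow> g x \<ge> 0"
  shows "sum g (A \<union> B) \<le> sum g A + sum g B"
proof -
  have "sum g (A \<union> B) + sum g (A \<inter> B) = sum g A + sum g B" using assms(1,2) by (rule sum.union_inter)
  moreover have "sum g (A \<inter> B) \<ge> 0" using assms by (intro sum_nonneg) auto
  ultimately show ?thesis by linarith
qed

lemma e_low: "exp 1 \<ge> (2718/1000::real)"
  using e_approx_32 by (simp add: abs_if split: if_splits)

lemma exp_nat: "exp (real n) = exp 1 ^ n"
  using exp_of_nat_mult[of n 1] by simp

lemma ln2_le: "ln 2 \<le> (7/10::real)"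
proof -
  have h: "(2718/1000::real) ^ 7 \<le> exp 1 ^ 7" using e_low by (intro power_mono) auto
  have c: "(2::real) ^ 10 \<le> (2718/1000::real) ^ 7" by (simp add: power_divide)
  have "(2::real) ^ 10 \<le> exp (real 7)" unfolding exp_nat using h c by linarith
  hence A: "ln ((2::real) ^ 10) \<le> ln (exp (real 7))" by (subst ln_le_cancel_iff) auto
  have B: "ln ((2::real) ^ 10) = real 10 * ln 2" by (rule ln_realpow)
  have C: "ln (exp (real 7)) = real 7" by (rule ln_exp)
  from A B C show ?thesis by simp
qed

lemma ln3_le: "ln 3 \<le> (9/8::real)"
proof -
  have h: "(2718/1000::real) ^ 9 \<le> exp 1 ^ 9" using e_low by (intro power_mono) auto
  have c: "(3::real) ^ 8 \<le> (2718/1000::real) ^ 9" by (simp add: power_divide)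
  have "(3::real) ^ 8 \<le> exp (real 9)" unfolding exp_nat using h c by linarith
  hence A: "ln ((3::real) ^ 8) \<le> ln (exp (real 9))" by (subst ln_le_cancel_iff) auto
  have B: "ln ((3::real) ^ 8) = real 8 * ln 3" by (rule ln_realpow)
  have C: "ln (exp (real 9)) = real 9" by (rule ln_exp)
  from A B C show ?thesis by simp
qed

lemma ln_ge4: assumes "x \<ge> (67::real)" shows "4 \<le> ln x"
proof -
  have h: "exp 1 ^ 4 \<le> (272/100::real) ^ 4" using e_less_272 by (intro power_mono) auto
  have c: "(272/100::real) ^ 4 \<le> 67" by (simp add: power_divide)
  have "exp (real 4) \<le> x" unfolding exp_nat using h c assms by linarith
  hence "ln (exp (real 4)) \<le> ln x" using assms by (subst ln_le_cancel_iff) auto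
  thus ?thesis by simp
qed

lemma nine_ln: assumes "x \<ge> (67::real)" shows "9 * ln x + 1 \<le> x"
proof -
  have h: "(2718/1000::real) ^ 4 \<le> exp 1 ^ 4" using e_low by (intro power_mono) auto
  have c: "50 \<le> (2718/1000::real) ^ 4" by (simp add: power_divide)
  have e4: "exp (real 4) \<ge> 50" unfolding exp_nat using h c by linarith
  have "ln (x / exp (real 4)) \<le> x / exp (real 4) - 1" using assms by (intro ln_le_minus_one) auto
  hence "ln x - 4 \<le> x / exp (real 4) - 1" using assms by (simp add: ln_div)
  moreover have "x / exp (real 4) \<le> x / 50" using e4 assms by (intro divide_left_mono) auto
  ultimately have "ln x \<le> x / 50 + 3" by linarith
  thus ?thesis using assms by linarith
qed

lemma ln_ge3: assumes "y \<ge> (36::real)" shows "3 \<le> ln y"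
proof -
  have h: "exp 1 ^ 3 \<le> (272/100::real) ^ 3" using e_less_272 by (intro power_mono) auto
  have c: "(272/100::real) ^ 3 \<le> 36" by (simp add: power_divide)
  have "exp (real 3) \<le> y" unfolding exp_nat using h c assms by linarith
  hence "ln (exp (real 3)) \<le> ln y" using assms by (subst ln_le_cancel_iff) auto
  thus ?thesis by simp
qed

lemma lin_aux:
  fixes Z X Y W L :: real
  shows "Z \<le> 1/3 \<Longrightarrow> X/4 \<le> Y/4 \<Longrightarrow> W \<le> (L+1)/3 \<Longrightarrow> L/3 + 46/15 \<le> 5/12*Y \<Longrightarrow>
    Z + (X/4 + 19/10) + W + 1/2 \<le> 2/3*Y"
  by (simp add: field_simps)

lemma final_ineq:
  fixes L q P F2 :: real
  assumes L: "L \<ge> 4" and q: "9 * L + 1 \<le> q" and P: "P \<le> 9 * L" "P \<ge> 9 * L - 1" "P \<ge> 1"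
    and F2: "F2 \<le> 3/2 * L + 1" "F2 \<ge> 0" and u3: "3 \<le> ln (9 * L)" and uL: "ln (9 * L) \<le> L"
  shows "(2*L + 3)/q + ((ln P)^2/4 + 19/10) + F2 * (2*L/P) + 1/2 \<le> 2 * ln (9 * L) * L / 3"
proof -
  define u where "u = ln (9 * L)"
  have u3': "3 \<le> u" and uL': "u \<le> L" using u3 uL by (simp_all add: u_def)
  have q0: "q > 0" using q L by linarith
  have "(2*L + 3)/q \<le> (q/3)/q" using q q0 L by (intro divide_right_mono) auto
  hence t1: "(2*L + 3)/q \<le> 1/3" using q0 by simp
  have lnP: "ln P \<le> u" unfolding u_def using P by (subst ln_le_cancel_iff) auto
  have lnP0: "ln P \<ge> 0" using P by simp
  have "(ln P)^2 \<le> u^2" using lnP lnP0 by (intro power_mono) auto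
  also have "u^2 \<le> L * u" using uL' u3' mult_right_mono[of u L u] by (simp add: power2_eq_square)
  finally have t2: "(ln P)^2/4 \<le> L * u / 4" by simp
  have P0: "P > 0" using P by simp
  have "F2 * (2*L) \<le> (3/2 * L + 1) * (2 * L)" using F2 L by (intro mult_right_mono) auto
  also have "\<dots> \<le> (L + 1)/3 * P"
  proof -
    have "(L + 1)/3 * (9 * L - 1) \<le> (L + 1)/3 * P" using P L by (intro mult_left_mono) auto
    moreover have "(3/2 * L + 1) * (2 * L) = 3 * (L * L) + 2 * L" by (simp add: algebra_simps)
    moreover have "(L + 1)/3 * (9 * L - 1) = 3 * (L * L) + 8/3 * L - 1/3" by (simp add: field_simps)
    ultimately show ?thesis using L by linarith
  qed
  finally have "F2 * (2*L) / P \<le> (L + 1)/3" using P0 by (simp add: pos_divide_le_eq)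
  hence t3: "F2 * (2*L/P) \<le> (L + 1)/3" by simp
  have "3 * L \<le> L * u" using u3' L mult_right_mono[of 3 u L] by (simp add: mult.commute)
  hence t4: "L/3 + 46/15 \<le> 5/12 * (L * u)" using L by linarith
  have "2 * u * L / 3 = 2/3 * (L * u)" by simp
  have "2 * ln (9 * L) * L / 3 = 2/3 * (L * u)" by (simp add: u_def)
  thus ?thesis using lin_aux[OF t1 t2 t3 t4] by linarith
qed
lemma head_sum:
  fixes T :: "nat set" and P :: nat
  assumes fin: "finite T" and T: "\<And>p. p \<in> T \<Longrightarrow> prime p \<and> p \<le> P" and P3: "P \<ge> 3"
  shows "(\<Sum>p\<in>T. ln p / (real p - 1)) \<le> (ln P)^2/4 + 19/10"
proof -
  define h where "h p = ln (real p) / (real p - 1)" for p :: nat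
  have hnn: "h p \<ge> 0" if "p \<ge> 2" for p using that by (simp add: h_def)
  have T2: "p \<ge> 2" if "p \<in> T" for p using T[OF that] prime_ge_2_nat by blast
  define T' where "T' = T - {2, 3}"
  have split: "T = (T \<inter> {2,3}) \<union> T'" by (auto simp: T'_def)
  have "sum h T = sum h (T \<inter> {2,3}) + sum h T'"
    by (subst split, rule sum.union_disjoint) (use fin in \<open>auto simp: T'_def\<close>)
  also have "sum h (T \<inter> {2,3}) \<le> sum h {2,3}" by (rule sum_mono2) (auto intro: hnn)
  also have "sum h {2,3} = ln 2 + ln 3 / 2" by (simp add: h_def)
  also have "sum h T' \<le> (ln P)^2/4 + (5/3 + ln 3)/6 + 1/6"
  proof -
    have odd: "odd p" "p \<ge> 5" if "p \<in> T'" for p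
    proof -
      have pp: "prime p" "p \<noteq> 2" "p \<noteq> 3" "p \<ge> 2" using that T T2 by (auto simp: T'_def)
      show "odd p" using pp prime_odd_nat[of p] by (cases "2 < p") auto
      thus "p \<ge> 5" using pp by presburger
    qed
    define M where "M = (P - 1) div 2"
    have M1: "1 \<le> M" using P3 by (simp add: M_def)
    have M2: "2 * M + 1 \<le> P" using P3 by (simp add: M_def)
    have inj: "inj_on (\<lambda>p. p div 2) T'"
    proof (rule inj_onI)
      fix x y assume "x \<in> T'" "y \<in> T'" "x div 2 = y div 2"
      thus "x = y" using odd[of x] odd[of y] by (metis odd_two_times_div_two_succ)
    qed
    have re: "sum h T' = (\<Sum>i\<in>(\<lambda>p. p div 2) ` T'. h (2 * i + 1))"
      by (subst sum.reindex[OF inj]) (auto intro!: sum.cong dest: odd simp: odd_two_times_div_two_succ)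
    have sub: "(\<lambda>p. p div 2) ` T' \<subseteq> {Suc 1..M}"
    proof
      fix i assume "i \<in> (\<lambda>p. p div 2) ` T'"
      then obtain p where p: "p \<in> T'" "i = p div 2" by blast
      have "p \<le> P" using p T by (auto simp: T'_def)
      moreover have "odd p" "p \<ge> 5" using odd[OF p(1)] by auto
      ultimately have "p div 2 \<le> (P - 1) div 2" "2 \<le> p div 2" by presburger+
      thus "i \<in> {Suc 1..M}" using p(2) by (auto simp: M_def)
    qed
    have "(\<Sum>i\<in>(\<lambda>p. p div 2) ` T'. h (2 * i + 1)) \<le> (- Gh (real (2 * 1 + 1))) - (- Gh (real (2 * M + 1)))"
    proof (rule tele_sub[OF sub M1])
      fix k assume k: "k \<in> {Suc 1..M}"
      show "0 \<le> h (2 * k + 1)" using k by (intro hnn) auto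
      have x5: "real (2 * k + 1) \<ge> 5" using k by auto
      have e: "real (2 * (k - 1) + 1) = real (2 * k + 1) - 2" using k by (simp add: of_nat_diff)
      have "h (2 * k + 1) \<le> Gh (real (2 * k + 1)) - Gh (real (2 * k + 1) - 2)"
        unfolding h_def by (rule head_step[OF x5])
      thus "h (2 * k + 1) \<le> - Gh (real (2 * (k - 1) + 1)) - - Gh (real (2 * k + 1))"
        unfolding e by simp
    qed
    also have "\<dots> = Gh (2 * M + 1) - Gh 3" by simp
    also have "Gh (2 * M + 1) \<le> (ln P)^2 / 4"
    proof -
      define x where "x = real (2 * M + 1)"
      have x1: "x \<ge> 1" by (simp add: x_def)
      have g0: "(5/3 + ln x)/(2*x) \<ge> 0" using x1 by (intro divide_nonneg_nonneg) auto
      have g1: "1/(2*x) \<ge> 0" using x1 by simp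
      have "Gh x \<le> (ln x)^2 / 4" unfolding Gh_def using g0 g1 by linarith
      hence "Gh (2 * M + 1) \<le> (ln (2 * M + 1))^2 / 4" by (simp only: x_def)
      also have "ln (real (2 * M + 1)) \<le> ln P" using M2 by (subst ln_le_cancel_iff) auto
      hence "(ln (2 * M + 1))^2 / 4 \<le> (ln P)^2/4" by (simp add: power_mono)
      finally show ?thesis by simp
    qed
    finally have Z: "(\<Sum>i\<in>(\<lambda>p. p div 2) ` T'. h (2 * i + 1)) \<le> (ln P)^2 / 4 - Gh 3" by simp
    have W: "- Gh 3 \<le> (5/3 + ln 3)/6 + 1/6"
    proof -
      have A: "Gh 3 = (ln 3)^2/4 - ((5/3 + ln 3)/6 + 1/6)" by (simp add: Gh_def)
      have B: "(ln (3::real))^2/4 \<ge> 0" by simp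
      show ?thesis unfolding A using B by simp
    qed
    show ?thesis using re Z W by linarith
  qed
  finally have "sum h T \<le> ln 2 + ln 3 / 2 + ((ln P)^2/4 + (5/3 + ln 3)/6 + 1/6)" by simp
  also have "\<dots> \<le> (ln P)^2/4 + 19/10" using ln2_le ln3_le by (simp add: field_simps)
  finally show ?thesis by (simp add: h_def)
qed

theorem lemma6:
  fixes q :: nat
  assumes "prime q" and "q \<ge> 67"
  shows "vterm q summable_on vset q \<and>
         infsum (vterm q) (vset q) \<le> 2 * ln (9 * ln (real q)) * ln (real q) / (3 * real q)"
proof -
  note qa = assms
  define L where "L = ln (real q)"
  have q67: "real q \<ge> 67" using assms(2) by simp
  have q3: "q \<ge> 3" using assms(2) by simp
  have q0: "real q > 0" using q3 by simp
  have L4: "L \<ge> 4" unfolding L_def by (rule ln_ge4[OF q67])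
  have qL: "9 * L + 1 \<le> real q" unfolding L_def by (rule nine_ln[OF q67])
  have u3: "3 \<le> ln (9 * L)" using L4 by (intro ln_ge3) simp
  have uL: "ln (9 * L) \<le> L"
  proof -
    have "ln (9*L) \<le> ln (real q)" using qL L4 by (subst ln_le_cancel_iff) auto
    thus ?thesis by (simp add: L_def)
  qed
  define P where "P = nat \<lfloor>9 * L\<rfloor>"
  have fl: "real_of_int \<lfloor>9 * L\<rfloor> \<le> 9 * L" "9 * L < real_of_int \<lfloor>9 * L\<rfloor> + 1"
    using floor_correct[of "9 * L"] by auto
  have flpos: "\<lfloor>9 * L\<rfloor> \<ge> 0" using L4 by simp
  have rP: "real P = real_of_int \<lfloor>9 * L\<rfloor>" unfolding P_def using flpos by simp
  have P_le: "real P \<le> 9 * L" using fl rP by simp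
  have P_ge: "real P \<ge> 9 * L - 1" using fl rP by simp
  have P1: "real P \<ge> 1" using P_ge L4 by simp
  have P3: "P \<ge> 3" using P_ge L4 by simp
  have Pq: "q * P + 1 \<le> q * q"
  proof -
    have "real P + 1 \<le> real q" using P_le qL by simp
    hence "P + 1 \<le> q" by linarith
    hence "q * (P + 1) \<le> q * q" by (rule mult_le_mono2)
    thus ?thesis using q3 by (simp add: algebra_simps)
  qed
  define F where "F = nat \<lceil>log 2 (4 * real q)\<rceil>"
  have lg: "log 2 (4 * real q) = 2 + L / ln 2"
  proof -
    have "log 2 (4 * real q) = log 2 4 + log 2 (real q)" using q0 by (simp add: log_mult)
    moreover have "log 2 (4::real) = 2"
    proof -
      have "log 2 ((2::real) ^ 2) = real 2" by (rule log_pow_cancel) auto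
      thus ?thesis by simp
    qed
    ultimately show ?thesis by (simp add: log_def L_def)
  qed
  have lgpos: "log 2 (4 * real q) \<ge> 0" using lg L4 by simp
  have cl: "log 2 (4 * real q) \<le> real_of_int \<lceil>log 2 (4 * real q)\<rceil>"
    "real_of_int \<lceil>log 2 (4 * real q)\<rceil> < log 2 (4 * real q) + 1"
    using ceiling_correct[of "log 2 (4 * real q)"] by auto
  have rF: "real F = real_of_int \<lceil>log 2 (4 * real q)\<rceil>"
    unfolding F_def using lgpos by simp
  have F_pow: "4 * real q \<le> 2 ^ F"
  proof -
    have "4 * real q = 2 powr (log 2 (4 * real q))" using q0 by simp
    also have "\<dots> \<le> 2 powr (real F)" using cl rF by (intro powr_mono) auto
    also have "\<dots> = 2 ^ F" by (simp add: powr_realpow)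
    finally show ?thesis .
  qed
  have F3: "F \<ge> 3"
  proof (rule ccontr)
    assume "\<not> F \<ge> 3"
    hence "F \<le> 2" by simp
    hence "(2::real) ^ F \<le> 2 ^ 2" by (intro power_increasing) auto
    thus False using F_pow q67 by simp
  qed
  have F2: "real F - 2 \<le> 3/2 * L + 1"
  proof -
    have A: "L / ln 2 \<le> L / (2/3)" using L4 ln2_ge_two_thirds by (intro divide_left_mono) auto
    have B: "L / (2/3) = 3/2 * L" by simp
    have C: "real F < log 2 (4 * real q) + 1" using cl(2) rF by linarith
    have "real F - 2 < log 2 (4 * real q) + 1 - 2" using C by simp
    also have "\<dots> = L / ln 2 + 1" using lg by simp
    also have "\<dots> \<le> 3/2 * L + 1" using A B by simp
    finally show ?thesis by simp
  qed
  have F2nn: "real F - 2 \<ge> 0" using F3 by simp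
  define t where "t p = ln (real p) / (real p ^ ord q p - 1)" for p
  have vt: "vterm q = t" by (auto simp: vterm_def fp_def t_def)
  have tnn: "t p \<ge> 0" if "p \<in> vset q" for p
  proof -
    note b = vset_basic[OF qa that]
    have p2: "(2::real) \<le> real p" using b(5) by simp
    have "real p ^ 1 \<le> real p ^ ord q p" using b(3) p2 by (intro power_increasing) auto
    hence "real p \<le> real p ^ ord q p" by (simp only: power_one_right)
    hence pos: "real p ^ ord q p - 1 > 0" using p2 by linarith
    have "ln (real p) \<ge> 0" using p2 by simp
    thus ?thesis using pos by (simp add: t_def)
  qed
  have bigdiv: "real p ^ ord q p - 1 \<ge> real q * (real p - 1)" if "p \<in> vset q" "p < q" for p
  proof -
    note b = vset_basic[OF qa that(1)]
    have d: "q * (p - 1) dvd p ^ ord q p - 1" using vset_small[OF qa that] by simp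
    have "p ^ 1 \<le> p ^ ord q p" using b by (intro power_increasing) auto
    hence pos: "p ^ ord q p - 1 > 0" using b by simp
    have "q * (p - 1) \<le> p ^ ord q p - 1" using dvd_imp_le[OF d pos] .
    hence "real (q * (p - 1)) \<le> real (p ^ ord q p - 1)" by (simp only: of_nat_le_iff)
    moreover have "real (p ^ ord q p - 1) = real p ^ ord q p - 1" using pos by (simp add: of_nat_diff)
    moreover have "real (q * (p - 1)) = real q * (real p - 1)"
    proof -
      have "real (p - 1) = real p - 1" using b(5) by (simp add: of_nat_diff)
      thus ?thesis by (simp only: of_nat_mult)
    qed
    ultimately show ?thesis by linarith
  qed
  have key: "sum t S \<le> ((2*L+3)/q + ((ln P)^2/4 + 19/10) + (real F - 2) * (2*L/P) + 1/2) / q"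
    if S: "finite S" "S \<subseteq> vset q" for S
  proof -
    define S1 where "S1 = {p\<in>S. ord q p = 2}"
    define S2 where "S2 = {p\<in>S. ord q p \<noteq> 2 \<and> q < p}"
    define S3 where "S3 = {p\<in>S. p < q \<and> p \<le> P}"
    define S4 where "S4 = {p\<in>S. p < q \<and> P < p \<and> ord q p \<le> F}"
    define S5 where "S5 = {p\<in>S. p < q \<and> P < p \<and> F < ord q p}"
    have neq: "p \<noteq> q" if "p \<in> S" for p using vset_basic(2)[OF qa] that S by auto
    have cover: "S = S1 \<union> S2 \<union> S3 \<union> S4 \<union> S5"
    proof
      show "S1 \<union> S2 \<union> S3 \<union> S4 \<union> S5 \<subseteq> S" by (auto simp: S1_def S2_def S3_def S4_def S5_def)
      show "S \<subseteq> S1 \<union> S2 \<union> S3 \<union> S4 \<union> S5"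
      proof
        fix p assume p: "p \<in> S"
        have "p < q \<or> q < p" using neq[OF p] by linarith
        thus "p \<in> S1 \<union> S2 \<union> S3 \<union> S4 \<union> S5" using p
          by (cases "ord q p = 2"; cases "p \<le> P"; cases "ord q p \<le> F")
             (auto simp: S1_def S2_def S3_def S4_def S5_def)
      qed
    qed
    have fins: "finite S1" "finite S2" "finite S3" "finite S4" "finite S5"
      using S(1) by (auto simp: S1_def S2_def S3_def S4_def S5_def)
    have nnS: "t p \<ge> 0" if "p \<in> S" for p using tnn that S by auto
    have "sum t S \<le> sum t (S1 \<union> S2 \<union> S3 \<union> S4) + sum t S5"
      by (subst cover, rule sum_union_le) (use fins cover nnS in auto)
    also have "sum t (S1 \<union> S2 \<union> S3 \<union> S4) \<le> sum t (S1 \<union> S2 \<union> S3) + sum t S4"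
      by (rule sum_union_le) (use fins cover nnS in auto)
    also have "sum t (S1 \<union> S2 \<union> S3) \<le> sum t (S1 \<union> S2) + sum t S3"
      by (rule sum_union_le) (use fins cover nnS in auto)
    also have "sum t (S1 \<union> S2) \<le> sum t S1 + sum t S2"
      by (rule sum_union_le) (use fins cover nnS in auto)
    finally have split: "sum t S \<le> sum t S1 + sum t S2 + sum t S3 + sum t S4 + sum t S5" by simp
    have b1: "sum t S1 \<le> (L + 3) / real q ^ 2"
    proof -
      define k where "k p = (p + 1) div q" for p
      have kp: "p + 1 = q * k p" "k p \<ge> 2" if "p \<in> S1" for p
      proof -
        have pv: "p \<in> vset q" "ord q p = 2" using that S by (auto simp: S1_def)
        have "q dvd p + 1" using vset_two(1)[OF qa pv] .
        thus e: "p + 1 = q * k p" by (simp add: k_def)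
        have "2 * q \<le> q * k p" using vset_two(2)[OF qa pv] e by simp
        thus "k p \<ge> 2" using q3 by (simp add: mult.commute)
      qed
      have inj: "inj_on k S1"
      proof (rule inj_onI)
        fix x y assume "x \<in> S1" "y \<in> S1" "k x = k y"
        thus "x = y" using kp(1)[of x] kp(1)[of y] by simp
      qed
      have "sum t S1 \<le> (\<Sum>p\<in>S1. (g1 L (k p - 1) - g1 L (k p)) / real q ^ 2)"
      proof (rule sum_mono)
        fix p assume p: "p \<in> S1"
        have "ord q p = 2" using p by (simp add: S1_def)
        hence "t p = ln p / (real p ^ 2 - 1)" by (simp add: t_def)
        thus "t p \<le> (g1 L (k p - 1) - g1 L (k p)) / real q ^ 2"
          using s1_term[OF q3 kp(2)[OF p] kp(1)[OF p]] by (simp add: L_def)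
      qed
      also have "\<dots> = (\<Sum>i\<in>k ` S1. g1 L (i - 1) - g1 L i) / real q ^ 2"
        by (simp add: sum.reindex[OF inj] sum_divide_distrib)
      also have "(\<Sum>i\<in>k ` S1. g1 L (i - 1) - g1 L i) \<le> g1 L 1"
      proof (rule tele_fin)
        show "finite (k ` S1)" using fins by simp
        show "k ` S1 \<subseteq> {Suc 1..}" using kp(2) by (auto simp: numeral_2_eq_2)
        show "g1 L i \<le> g1 L (i - 1)" if "i \<ge> Suc 1" for i
        proof -
          have A: "(L + ln (real i)) / (real i * (real i - 1)) \<ge> 0"
            using that L4 by (intro divide_nonneg_nonneg) auto
          have B: "(L + ln (real i)) / (real i * (real i - 1)) \<le> g1 L (i - 1) - g1 L i"
            using s1_step[of i L] that L4 by simp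
          show ?thesis using A B by linarith
        qed
        show "g1 L i \<ge> 0" for i using g1_nonneg L4 by simp
      qed
      hence "(\<Sum>i\<in>k ` S1. g1 L (i - 1) - g1 L i) / real q ^ 2 \<le> g1 L 1 / real q ^ 2"
        by (intro divide_right_mono) auto
      finally show ?thesis by (simp add: g1_def)
    qed
    have b2: "sum t S2 \<le> L / real q ^ 2"
    proof -
      have "sum t S2 \<le> (\<Sum>p\<in>S2. (L / q) * (1 / real (p - 1) - 1 / real p))"
      proof (rule sum_mono)
        fix p assume p: "p \<in> S2"
        have pv: "p \<in> vset q" "ord q p \<noteq> 2" "q < p" using p S by (auto simp: S2_def)
        have "ord q p \<ge> 3" using vset_basic(3)[OF qa pv(1)] pv(2) by simp
        thus "t p \<le> (L / q) * (1 / real (p - 1) - 1 / real p)"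
          using s2_term[OF q3 pv(3)] by (simp add: t_def L_def)
      qed
      also have "\<dots> = (L / q) * (\<Sum>p\<in>S2. (1 / real (p - 1) - 1 / real p))"
        by (simp add: sum_distrib_left)
      also have "(\<Sum>p\<in>S2. (1 / real (p - 1) - 1 / real p)) \<le> 1 / real q"
      proof -
        have "(\<Sum>p\<in>S2. (\<lambda>k. 1 / real k) (p - 1) - (\<lambda>k. 1 / real k) p) \<le> (\<lambda>k. 1 / real k) q"
        proof (rule tele_fin)
          show "finite S2" by (rule fins)
          show "S2 \<subseteq> {Suc q..}" by (auto simp: S2_def)
          show "(\<lambda>k. 1 / real k) k \<le> (\<lambda>k. 1 / real k) (k - 1)" if "k \<ge> Suc q" for k
          proof -
            have "real (k - 1) \<ge> 1" using that q3 by (simp add: of_nat_diff)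
            moreover have "real (k - 1) \<le> real k" by simp
            ultimately show ?thesis by (simp add: frac_le)
          qed
          show "(\<lambda>k. 1 / real k) k \<ge> 0" for k by simp
        qed
        thus ?thesis by simp
      qed
      hence "(L / q) * (\<Sum>p\<in>S2. (1 / real (p - 1) - 1 / real p)) \<le> (L / q) * (1 / real q)"
        using L4 by (intro mult_left_mono) auto
      finally show ?thesis by (simp add: power2_eq_square)
    qed
    have b3: "sum t S3 \<le> ((ln P)^2/4 + 19/10) / q"
    proof -
      have "sum t S3 \<le> (\<Sum>p\<in>S3. (ln p / (real p - 1)) / q)"
      proof (rule sum_mono)
        fix p assume p: "p \<in> S3"
        have pv: "p \<in> vset q" "p < q" using p S by (auto simp: S3_def)
        note b = vset_basic[OF qa pv(1)]
        have qp: "real q * (real p - 1) > 0" using b(5) q0 by simp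
        have bd: "real q * (real p - 1) \<le> real p ^ ord q p - 1" by (rule bigdiv[OF pv])
        have "ln p / (real p ^ ord q p - 1) \<le> ln p / (real q * (real p - 1))"
        proof (rule divide_left_mono)
          show "0 \<le> ln (real p)" using b(5) by simp
          show "real q * (real p - 1) \<le> real p ^ ord q p - 1" by (rule bd)
          have "real p ^ ord q p - 1 > 0" using qp bd by linarith
          thus "0 < (real p ^ ord q p - 1) * (real q * (real p - 1))" using qp by simp
        qed
        moreover have "ln p / (real q * (real p - 1)) = (ln p / (real p - 1)) / q" by (simp add: mult.commute)
        ultimately show "t p \<le> (ln p / (real p - 1)) / q" by (simp only: t_def)
      qed
      also have "\<dots> = (\<Sum>p\<in>S3. ln p / (real p - 1)) / q" by (simp add: sum_divide_distrib)
      also have "(\<Sum>p\<in>S3. ln p / (real p - 1)) \<le> (ln P)^2/4 + 19/10"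
        by (rule head_sum[OF fins(3) _ P3]) (use S vset_basic(1)[OF qa] in \<open>auto simp: S3_def\<close>)
      hence "(\<Sum>p\<in>S3. ln p / (real p - 1)) / q \<le> ((ln P)^2/4 + 19/10) / q"
        by (intro divide_right_mono) auto
      finally show ?thesis .
    qed
    have b4: "sum t S4 \<le> (real F - 2) * (2 * L / (q * P))"
    proof -
      have img: "(\<lambda>p. ord q p) ` S4 \<subseteq> {3..F}"
        using S vset_small(2)[OF qa] by (auto simp: S4_def)
      have "sum t S4 = (\<Sum>f\<in>{3..F}. sum t {p\<in>S4. ord q p = f})"
        by (rule sum.group[symmetric]) (use fins img in auto)
      also have "\<dots> \<le> (\<Sum>f\<in>{3..F}. 2 * L / (q * P))"
      proof (rule sum_mono)
        fix f assume f: "f \<in> {3..F}"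
        define A where "A = {p\<in>S4. ord q p = f}"
        have cA: "card A \<le> f - 1"
        proof -
          define R where "R = {x\<in>{..<q}. [x ^ f = 1] (mod q)}"
          have "A \<subseteq> R - {1}"
          proof
            fix p assume p: "p \<in> A"
            have pv: "p \<in> vset q" "p < q" "ord q p = f" using p S by (auto simp: A_def S4_def)
            have "[p ^ f = 1] (mod q)" using ord[of p q] pv(3) by simp
            moreover have "p \<noteq> 1" using vset_basic(5)[OF qa pv(1)] by simp
            ultimately show "p \<in> R - {1}" using pv by (auto simp: R_def)
          qed
          hence "card A \<le> card (R - {1})" by (intro card_mono) (auto simp: R_def)
          also have "card (R - {1}) = card R - 1"
            using q3 by (intro card_Diff_singleton) (auto simp: R_def)
          also have "card R \<le> f" unfolding R_def using f qa(1) by (intro roots_mod_prime_bound) auto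
          finally show ?thesis by simp
        qed
        have tb: "t p \<le> 2 * L / (f * q * P)" if p: "p \<in> A" for p
        proof -
          have pv: "p \<in> vset q" "p < q" "P < p" "ord q p = f" using p S by (auto simp: A_def S4_def)
          note b = vset_basic[OF qa pv(1)]
          have "real q * (real p - 1) \<ge> real q * real P" using pv(3) q0 by (intro mult_left_mono) auto
          hence big: "real p ^ f - 1 \<ge> real q * real P" using bigdiv[OF pv(1,2)] pv(4) by simp
          have "f \<ge> 1" using f by simp
          from s4_term[OF q3 _ Pq this big b(5)] P3 show ?thesis using pv(4) by (simp add: t_def L_def)
        qed
        have "sum t A \<le> of_nat (card A) * (2 * L / (f * q * P))"
          by (rule sum_bounded_above) (use tb in auto)
        also have "\<dots> \<le> of_nat f * (2 * L / (f * q * P))"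
          using cA L4 q0 P1 by (intro mult_right_mono) auto
        also have "\<dots> = 2 * L / (q * P)" using f by simp
        finally show "sum t {p\<in>S4. ord q p = f} \<le> 2 * L / (q * P)" by (simp add: A_def)
      qed
      also have "\<dots> = (real F - 2) * (2 * L / (q * P))" using F3 by (simp add: of_nat_diff)
      finally show ?thesis .
    qed
    have b5: "sum t S5 \<le> 1 / (2 * real q)"
    proof -
      have "sum t S5 \<le> (\<Sum>p\<in>S5. (1 / 2 ^ (F - 2)) * (1 / real p - 1 / real (p + 1)))"
      proof (rule sum_mono)
        fix p assume p: "p \<in> S5"
        have pv: "p \<in> vset q" "F < ord q p" using p S by (auto simp: S5_def)
        show "t p \<le> (1 / 2 ^ (F - 2)) * (1 / real p - 1 / real (p + 1))"
          using s5_term[OF vset_basic(5)[OF qa pv(1)] _ pv(2)] F3 by (simp add: t_def)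
      qed
      also have "\<dots> = (1 / 2 ^ (F - 2)) * (\<Sum>p\<in>S5. (1 / real p - 1 / real (p + 1)))"
        by (simp add: sum_distrib_left)
      also have "(\<Sum>p\<in>S5. (1 / real p - 1 / real (p + 1))) \<le> 1 / 2"
      proof -
        have ge2: "p \<ge> 2" if "p \<in> S5" for p using that S vset_basic(5)[OF qa] by (auto simp: S5_def)
        have "(\<Sum>p\<in>S5. (1 / real p - 1 / real (p + 1))) = (\<Sum>p\<in>S5. (1 / real (p - 1 + 1) - 1 / real (p + 1)))"
        proof (rule sum.cong)
          fix x assume "x \<in> S5"
          hence e: "x - 1 + 1 = x" using ge2[of x] by simp
          show "1 / real x - 1 / real (x + 1) = 1 / real (x - 1 + 1) - 1 / real (x + 1)"
            by (simp only: e)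
        qed simp
        also have "\<dots> \<le> 1 / real (1 + 1)"
        proof -
          have "(\<Sum>p\<in>S5. (\<lambda>k. 1 / real (k + 1)) (p - 1) - (\<lambda>k. 1 / real (k + 1)) p) \<le> (\<lambda>k. 1 / real (k + 1)) 1"
          proof (rule tele_fin)
            show "finite S5" by (rule fins)
            show "S5 \<subseteq> {Suc 1..}" using ge2 by (auto simp: numeral_2_eq_2)
            show "(\<lambda>k. 1 / real (k + 1)) k \<le> (\<lambda>k. 1 / real (k + 1)) (k - 1)" if "k \<ge> Suc 1" for k
            proof -
              have "real (k - 1 + 1) \<ge> 1" using that by (simp add: of_nat_diff)
              moreover have "real (k - 1 + 1) \<le> real (k + 1)" by simp
              ultimately show ?thesis by (simp add: frac_le)
            qed
            show "(\<lambda>k. 1 / real (k + 1)) k \<ge> 0" for k by simp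
          qed
          thus ?thesis by simp
        qed
        finally show ?thesis by simp
      qed
      hence "(1 / 2 ^ (F - 2)) * (\<Sum>p\<in>S5. (1 / real p - 1 / real (p + 1))) \<le> (1 / 2 ^ (F - 2)) * (1 / 2)"
        by (intro mult_left_mono) auto
      also have "(1 / 2 ^ (F - 2)) * (1 / 2) \<le> 1 / (2 * real q)"
      proof -
        have Fe: "F - 2 + 2 = F" using F3 by simp
        have "(2::real) ^ F = 2 ^ (F - 2 + 2)" by (simp only: Fe)
        also have "\<dots> = 2 ^ (F - 2) * 2 ^ 2" by (rule power_add)
        also have "\<dots> = 2 ^ (F - 2) * 4" by simp
        finally have "(2::real) ^ F = 2 ^ (F - 2) * 4" .
        hence "real q \<le> 2 ^ (F - 2)" using F_pow by simp
        thus ?thesis using q0 by (simp add: field_simps)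
      qed
      finally show ?thesis .
    qed
    have "sum t S \<le> (L + 3) / real q ^ 2 + L / real q ^ 2 + ((ln P)^2/4 + 19/10) / q
        + (real F - 2) * (2 * L / (q * P)) + 1 / (2 * real q)"
      using split b1 b2 b3 b4 b5 by linarith
    also have "\<dots> = ((2*L+3)/q + ((ln P)^2/4 + 19/10) + (real F - 2) * (2*L/P) + 1/2) / q"
      using q0 P1 by (simp add: field_simps power2_eq_square)
    finally show ?thesis .
  qed
  define B where "B = 2 * ln (9 * L) * L / (3 * real q)"
  have fin: "sum t S \<le> B" if "finite S" "S \<subseteq> vset q" for S
  proof -
    have "sum t S \<le> ((2*L+3)/q + ((ln P)^2/4 + 19/10) + (real F - 2) * (2*L/P) + 1/2) / q"
      by (rule key[OF that])
    also have "\<dots> \<le> (2 * ln (9 * L) * L / 3) / q"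
      using final_ineq[OF L4 qL P_le P_ge P1 F2 F2nn u3 uL] q0 by (intro divide_right_mono) auto
    also have "\<dots> = B" by (simp add: B_def)
    finally show ?thesis .
  qed
  have summ: "t summable_on vset q"
  proof (rule nonneg_bdd_above_summable_on)
    show "\<And>x. x \<in> vset q \<Longrightarrow> 0 \<le> t x" by (rule tnn)
    show "bdd_above (sum t ` {F. F \<subseteq> vset q \<and> finite F})"
      by (rule bdd_aboveI[where M = B]) (use fin in auto)
  qed
  have "infsum t (vset q) \<le> B" by (rule infsum_le_finite_sums[OF summ fin])
  thus ?thesis using summ unfolding vt B_def L_def by simp
qed

end
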